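(* Let $w\in F_2$ be a word in $x,y$ whose trace map $\psi_w$ is Big, and define words recursively by $v_1(x,y)=w(x,y)$, $v_{n+1}(x,y)=w(v_n(x,y),y)$. Then for every $n\ge 1$ the word map $v_n:\mathrm{SL}(2,\mathbb{C})^2\to\mathrm{SL}(2,\mathbb{C})$ is almost surjective, i.e. its image contains $\mathrm{SL}(2,\mathbb{C})\setminus\{-\mathrm{id}\}$.
   Context: For a word $w(x,y)$ there are polynomials $P_w(s,t,u)$, $Q_w(s,t,u)$ such that for all $x,y\in\mathrm{SL}(2,\mathbb{C})$: $\mathrm{tr}(w(x,y))=P_w(\mathrm{tr}\,x,\mathrm{tr}\,y,\mathrm{tr}\,xy)$ and $\mathrm{tr}(w(x,y)y)=Q_w(\mathrm{tr}\,x,\mathrm{tr}\,y,\mathrm{tr}\,xy)$. The trace map is $\psi_w(s,t,u)=(P_w(s,t,u),t,Q_w(s,t,u))$. For $a\in\mathbb{C}$, $\psi_a(s,u)=(P_w(s,a,u),Q_w(s,a,u))$ is Big if $\psi_a(\mathbb{C}^2)=\mathbb{C}^2\setminus T_a$ with $T_a$ finite; $\psi_w$ is Big if some $\psi_a$ is Big. *)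

theory Defs
  imports "HOL-Analysis.Analysis"
begin

type_synonym mat2 = "complex^2^2"

definition SL2 :: "mat2 set" where
  "SL2 = {A. det A = 1}"

text \<open>Words in the free group F_2 on x, y: lists of letters, each letter a generator
  together with a flag saying whether it is inverted.\<close>
datatype gen = GX | GY

type_synonym word = "(gen \<times> bool) list"

fun eval_letter :: "mat2 \<Rightarrow> mat2 \<Rightarrow> gen \<times> bool \<Rightarrow> mat2" where
  "eval_letter x y (GX, False) = x"
| "eval_letter x y (GX, True) = matrix_inv x"
| "eval_letter x y (GY, False) = y"
| "eval_letter x y (GY, True) = matrix_inv y"

definition eval_word :: "word \<Rightarrow> mat2 \<Rightarrow> mat2 \<Rightarrow> mat2" where
  "eval_word w x y = foldr (\<lambda>l M. eval_letter x y l ** M) w (mat 1)"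

fun iter_word_map :: "word \<Rightarrow> nat \<Rightarrow> mat2 \<Rightarrow> mat2 \<Rightarrow> mat2" where
  "iter_word_map w 0 x y = x"
| "iter_word_map w (Suc n) x y = eval_word w (iter_word_map w n x y) y"

definition poly3 :: "(complex \<Rightarrow> complex \<Rightarrow> complex \<Rightarrow> complex) \<Rightarrow> bool" where
  "poly3 P \<longleftrightarrow> (\<exists>(c :: nat \<Rightarrow> nat \<Rightarrow> nat \<Rightarrow> complex) N.
      \<forall>s t u. P s t u = (\<Sum>i\<le>N. \<Sum>j\<le>N. \<Sum>k\<le>N. c i j k * s ^ i * t ^ j * u ^ k))"

definition trace_polys :: "word \<Rightarrow> (complex \<Rightarrow> complex \<Rightarrow> complex \<Rightarrow> complex)
    \<Rightarrow> (complex \<Rightarrow> complex \<Rightarrow> complex \<Rightarrow> complex) \<Rightarrow> bool" where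
  "trace_polys w P Q \<longleftrightarrow> poly3 P \<and> poly3 Q \<and>
     (\<forall>x\<in>SL2. \<forall>y\<in>SL2.
        trace (eval_word w x y) = P (trace x) (trace y) (trace (x ** y)) \<and>
        trace (eval_word w x y ** y) = Q (trace x) (trace y) (trace (x ** y)))"

definition psi_a_big :: "(complex \<Rightarrow> complex \<Rightarrow> complex \<Rightarrow> complex)
    \<Rightarrow> (complex \<Rightarrow> complex \<Rightarrow> complex \<Rightarrow> complex) \<Rightarrow> complex \<Rightarrow> bool" where
  "psi_a_big P Q a \<longleftrightarrow> (\<exists>T. finite T \<and>
     (\<lambda>(s, u). (P s a u, Q s a u)) ` UNIV = UNIV - T)"

text \<open>The trace map psi_w is Big (P_w, Q_w are uniquely determined as functions,
  since (x,y) \<mapsto> (tr x, tr y, tr xy) maps SL2^2 onto C^3).\<close>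
definition trace_map_big :: "word \<Rightarrow> bool" where
  "trace_map_big w \<longleftrightarrow> (\<exists>P Q. trace_polys w P Q \<and> (\<exists>a. psi_a_big P Q a))"

end

theory Submission
  imports Defs
begin



definition mk :: "complex \<Rightarrow> complex \<Rightarrow> complex \<Rightarrow> complex \<Rightarrow> mat2" where
  "mk a b c d = vector [vector [a,b], vector [c,d]]"

lemma mk_nth[simp]: "mk a b c d $ 1 $ 1 = a" "mk a b c d $ 1 $ 2 = b"
  "mk a b c d $ 2 $ 1 = c" "mk a b c d $ 2 $ 2 = d"
  by (simp_all add: mk_def)

lemma mk_eta: "A = mk (A$1$1) (A$1$2) (A$2$1) (A$2$2)"
  by (simp add: vec_eq_iff forall_2)

lemma mk_eq[simp]: "mk a b c d = mk a' b' c' d' \<longleftrightarrow> a = a' \<and> b = b' \<and> c = c' \<and> d = d'"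
  by (metis mk_nth)

lemma mk_mult[simp]: "mk a b c d ** mk e f g h = mk (a*e+b*g) (a*f+b*h) (c*e+d*g) (c*f+d*h)"
  by (simp add: vec_eq_iff forall_2 matrix_matrix_mult_def sum_2)

lemma mat1_mk: "mat 1 = mk 1 0 0 1"
  by (simp add: vec_eq_iff forall_2 mat_def)

lemma nmat1_mk: "- mat 1 = mk (-1) 0 0 (-1)"
  by (simp add: vec_eq_iff forall_2 mat_def)

lemma neg_mk[simp]: "- mk a b c d = mk (-a) (-b) (-c) (-d)"
  by (simp add: vec_eq_iff forall_2)

lemma det_mk[simp]: "det (mk a b c d) = a*d - b*c"
  by (simp add: det_2)

lemma trace_mk[simp]: "trace (mk a b c d) = a + d"
  by (simp add: trace_def sum_2)




lemma mk_cases: obtains a b c d where "A = mk a b c d"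
  using mk_eta by blast

definition adj :: "mat2 \<Rightarrow> mat2" where
  "adj A = mk (A$2$2) (-A$1$2) (-A$2$1) (A$1$1)"

lemma adj_mk[simp]: "adj (mk a b c d) = mk d (-b) (-c) a"
  by (simp add: adj_def)

lemma adj_inv: assumes "det A = 1" shows "A ** adj A = mat 1" "adj A ** A = mat 1"
proof -
  obtain a b c d where A: "A = mk a b c d" by (rule mk_cases)
  show "A ** adj A = mat 1" "adj A ** A = mat 1" using assms
    by (simp_all add: A mat1_mk algebra_simps)
qed

lemma matrix_inv_sl: assumes "det A = 1" shows "matrix_inv A = adj A"
proof -
  have ex: "\<exists>A'. A ** A' = mat 1 \<and> A' ** A = mat 1" using adj_inv[OF assms] by blast
  define B where "B = matrix_inv A"
  have B: "A ** B = mat 1 \<and> B ** A = mat 1"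
    unfolding B_def matrix_inv_def by (rule someI_ex[OF ex])
  have "B = B ** (A ** adj A)" using adj_inv[OF assms] by simp
  also have "\<dots> = (B ** A) ** adj A" by (simp add: matrix_mul_assoc)
  also have "\<dots> = adj A" using B by simp
  finally show ?thesis unfolding B_def .
qed

lemma det_adj[simp]: "det (adj A) = det A"
proof -
  obtain a b c d where A: "A = mk a b c d" by (rule mk_cases)
  show ?thesis by (simp add: A mult.commute)
qed

lemma SL2_mult: "x \<in> SL2 \<Longrightarrow> y \<in> SL2 \<Longrightarrow> x ** y \<in> SL2"
  by (simp add: SL2_def det_mul)

lemma SL2_adj: "x \<in> SL2 \<Longrightarrow> adj x \<in> SL2"
  by (simp add: SL2_def)

lemma SL2_one: "mat 1 \<in> SL2"
  by (simp add: SL2_def)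

lemma eval_word_Nil: "eval_word [] x y = mat 1"
  by (simp add: eval_word_def)

lemma eval_word_Cons: "eval_word (l # w) x y = eval_letter x y l ** eval_word w x y"
  by (simp add: eval_word_def)

lemma eval_letter_SL2: "x \<in> SL2 \<Longrightarrow> y \<in> SL2 \<Longrightarrow> eval_letter x y l \<in> SL2"
  by (cases l, rename_tac gg bb, case_tac gg; case_tac bb; auto simp: matrix_inv_sl SL2_def)

lemma eval_word_SL2: "x \<in> SL2 \<Longrightarrow> y \<in> SL2 \<Longrightarrow> eval_word w x y \<in> SL2"
  by (induction w) (auto simp: eval_word_Nil eval_word_Cons SL2_one SL2_mult eval_letter_SL2)

lemma iter_SL2: "x \<in> SL2 \<Longrightarrow> y \<in> SL2 \<Longrightarrow> iter_word_map w n x y \<in> SL2"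
  by (induction n) (auto simp: eval_word_SL2)

definition conj :: "mat2 \<Rightarrow> mat2 \<Rightarrow> mat2" where
  "conj g x = g ** x ** adj g"

lemma conj_mult: "g \<in> SL2 \<Longrightarrow> conj g x ** conj g y = conj g (x ** y)"
proof -
  assume "g \<in> SL2"
  then have gi: "adj g ** g = mat 1" by (simp add: SL2_def adj_inv)
  have "conj g x ** conj g y = g ** x ** (adj g ** g) ** y ** adj g"
    unfolding conj_def by (simp add: matrix_mul_assoc)
  also have "\<dots> = conj g (x ** y)" unfolding conj_def gi by (simp add: matrix_mul_assoc)
  finally show ?thesis .
qed

lemma conj_one: "g \<in> SL2 \<Longrightarrow> conj g (mat 1) = mat 1"
  unfolding conj_def by (simp add: SL2_def adj_inv)

lemma conj_SL2: "g \<in> SL2 \<Longrightarrow> x \<in> SL2 \<Longrightarrow> conj g x \<in> SL2"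
  unfolding conj_def by (simp add: SL2_mult SL2_adj)

lemma conj_adj: "adj (conj g x) = conj g (adj x)"
proof -
  obtain a b c d where g: "g = mk a b c d" by (rule mk_cases)
  obtain a' b' c' d' where x: "x = mk a' b' c' d'" by (rule mk_cases)
  show ?thesis unfolding conj_def g x by (simp add: algebra_simps)
qed

lemma conj_letter: "g \<in> SL2 \<Longrightarrow> x \<in> SL2 \<Longrightarrow> y \<in> SL2 \<Longrightarrow>
  eval_letter (conj g x) (conj g y) l = conj g (eval_letter x y l)"
  using conj_SL2[of g x] conj_SL2[of g y]
  by (cases l, rename_tac gg bb, case_tac gg; case_tac bb; auto simp: matrix_inv_sl SL2_def conj_adj)

lemma conj_word: "g \<in> SL2 \<Longrightarrow> x \<in> SL2 \<Longrightarrow> y \<in> SL2 \<Longrightarrow>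
  eval_word w (conj g x) (conj g y) = conj g (eval_word w x y)"
  by (induction w) (auto simp: eval_word_Nil eval_word_Cons conj_one conj_letter conj_mult)

lemma conj_iter: "g \<in> SL2 \<Longrightarrow> x \<in> SL2 \<Longrightarrow> y \<in> SL2 \<Longrightarrow>
  iter_word_map w n (conj g x) (conj g y) = conj g (iter_word_map w n x y)"
  by (induction n) (auto simp: conj_word iter_SL2)




lemma trace_iter:
  assumes tp: "trace_polys w P Q" and x: "x \<in> SL2" and y: "y \<in> SL2"
  shows "(trace (iter_word_map w n x y), trace (iter_word_map w n x y ** y)) =
         ((\<lambda>(s, u). (P s (trace y) u, Q s (trace y) u)) ^^ n) (trace x, trace (x ** y))"
proof (induction n)
  case 0 then show ?case by simp
next
  case (Suc n)
  have "iter_word_map w n x y \<in> SL2" using iter_SL2[OF x y] .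
  then show ?case using tp y unfolding trace_polys_def by (simp add: Suc[symmetric])
qed

lemma traces_onto: "\<exists>x\<in>SL2. \<exists>y\<in>SL2. trace x = s \<and> trace y = a \<and> trace (x ** y) = u"
proof -
  define r where "r = csqrt (a^2 - 4)"
  have r2: "r^2 = a^2 - 4" unfolding r_def by simp
  define p where "p = (a + r) / 2"
  have "p * (a - p) = 1" unfolding p_def using r2
    by (simp add: field_simps power2_eq_square)
  then show ?thesis
    by (intro bexI[of _ "mk s 1 (-1) 0"] bexI[of _ "mk p 0 (u - s*p) (a - p)"])
       (auto simp: SL2_def)
qed

definition comp :: "complex \<Rightarrow> mat2" where "comp c = mk 0 (-1) 1 c"

lemma companion:
  assumes z: "z \<in> SL2" and ns: "\<not> (z$1$2 = 0 \<and> z$2$1 = 0 \<and> z$1$1 = z$2$2)"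
  shows "\<exists>g\<in>SL2. z = conj g (comp (trace z))"
proof -
  obtain p q r t where zz: "z = mk p q r t" by (rule mk_cases)
  have dz: "p*t - q*r = 1" using z by (simp add: SL2_def zz)
  have "\<exists>e1 e2. r*e1^2 + (t-p)*e1*e2 - q*e2^2 \<noteq> 0"
  proof (cases "r = 0")
    case False then show ?thesis by (intro exI[of _ 1] exI[of _ 0]) simp
  next
    case True
    show ?thesis
    proof (cases "q = 0")
      case False then show ?thesis by (intro exI[of _ 0] exI[of _ 1]) simp
    next
      case False': True
      with True ns have "t - p \<noteq> 0" by (simp add: zz)
      then show ?thesis using True False' by (intro exI[of _ 1] exI[of _ 1]) simp
    qed
  qed
  then obtain e1 e2 where D: "r*e1^2 + (t-p)*e1*e2 - q*e2^2 \<noteq> 0" by blast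
  define l where "l = inverse (csqrt (r*e1^2 + (t-p)*e1*e2 - q*e2^2))"
  have l2: "l^2 * (r*e1^2 + (t-p)*e1*e2 - q*e2^2) = 1"
    unfolding l_def using D by (simp add: power_inverse field_simps)
  define w1 where "w1 = l * e1"
  define w2 where "w2 = l * e2"
  have Dw: "r*w1^2 + (t-p)*w1*w2 - q*w2^2 = 1"
    using l2 unfolding w1_def w2_def by (simp add: power_mult_distrib power2_eq_square algebra_simps)
  define g where "g = mk w1 (p*w1 + q*w2) w2 (r*w1 + t*w2)"
  have gS: "g \<in> SL2" using Dw unfolding g_def SL2_def
    by (simp add: power2_eq_square algebra_simps)
  have zg: "z ** g = g ** comp (trace z)"
    unfolding zz g_def comp_def using dz
    by simp (algebra)
  have "z = z ** (g ** adj g)" using gS by (simp add: SL2_def adj_inv)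
  also have "\<dots> = g ** comp (trace z) ** adj g" using zg by (simp add: matrix_mul_assoc)
  finally show ?thesis using gS unfolding conj_def by blast
qed




lemma cofin_iter:
  fixes F :: "'a \<Rightarrow> 'a"
  assumes "finite T" "range F = UNIV - T"
  shows "\<exists>T'. finite T' \<and> UNIV - T' \<subseteq> range (F^^n)"
proof (induction n)
  case 0 show ?case by (rule exI[of _ "{}"]) simp
next
  case (Suc n)
  then obtain T' where T': "finite T'" "UNIV - T' \<subseteq> range (F^^n)" by blast
  have r: "range (F^^Suc n) = F ` range (F^^n)" by (simp add: image_comp)
  have "UNIV - (T \<union> F ` T') \<subseteq> F ` (UNIV - T')"
  proof
    fix z assume z: "z \<in> UNIV - (T \<union> F ` T')"
    then have "z \<in> range F" using assms(2) by simp
    then obtain y where y: "z = F y" by (rule rangeE)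
    have "y \<notin> T'" using z y by auto
    then show "z \<in> F ` (UNIV - T')" using y by simp
  qed
  also have "\<dots> \<subseteq> range (F^^Suc n)" unfolding r using T'(2) by (rule image_mono)
  finally show ?case using T' assms(1) by (intro exI[of _ "T \<union> F ` T'"]) simp
qed

lemma scalar_SL2: "z \<in> SL2 \<Longrightarrow> z$1$2 = 0 \<Longrightarrow> z$2$1 = 0 \<Longrightarrow> z$1$1 = z$2$2 \<Longrightarrow>
  z = mat 1 \<or> z = - mat 1"
proof -
  assume a: "z \<in> SL2" "z$1$2 = 0" "z$2$1 = 0" "z$1$1 = z$2$2"
  obtain p q r t where zz: "z = mk p q r t" by (rule mk_cases)
  have "p^2 = 1" using a by (simp add: zz SL2_def power2_eq_square)
  then have "p = 1 \<or> p = -1" by (simp add: power2_eq_1_iff)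
  then show ?thesis using a by (auto simp: zz mat1_mk)
qed

lemma adj_mult: "adj (g ** h) = adj h ** adj g"
proof -
  obtain a b c d where g: "g = mk a b c d" by (rule mk_cases)
  obtain a' b' c' d' where h: "h = mk a' b' c' d'" by (rule mk_cases)
  show ?thesis unfolding g h by (simp add: algebra_simps)
qed

lemma conj_conj: "conj g (conj h x) = conj (g ** h) x"
  unfolding conj_def adj_mult by (simp add: matrix_mul_assoc)

lemma adj_one: "adj (mat 1) = mat 1" by (simp add: mat1_mk)

lemma conj_inv: "h \<in> SL2 \<Longrightarrow> conj (adj h) (conj h x) = x"
  unfolding conj_conj using adj_inv(2)[of h] by (simp add: SL2_def conj_def adj_one)

lemma eval_word_one: "eval_word w (mat 1) (mat 1) = mat 1"
proof (induction w)
  case Nil then show ?case by (simp add: eval_word_Nil)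
next
  case (Cons l w)
  have mi: "matrix_inv (mat 1 :: mat2) = mat 1" by (simp add: matrix_inv_sl mat1_mk)
  show ?case using Cons
    by (cases l, rename_tac gg bb, case_tac gg; case_tac bb; simp add: eval_word_Cons mi)
qed

lemma iter_one: "iter_word_map w n (mat 1) (mat 1) = mat 1"
  by (induction n) (simp_all add: eval_word_one)

theorem corollary8p3:
  fixes w :: word and n :: nat
  assumes "trace_map_big w" and "n \<ge> 1"
  shows "SL2 - {- mat 1} \<subseteq> (\<lambda>(x, y). iter_word_map w n x y) ` (SL2 \<times> SL2)"
proof
  fix z assume zin: "z \<in> SL2 - {- mat 1}"
  obtain P Q a where tp: "trace_polys w P Q" and big: "psi_a_big P Q a"
    using assms(1) unfolding trace_map_big_def by blast
  define F where "F = (\<lambda>(s, u). (P s a u, Q s a u))"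
  obtain T where T: "finite T" "range F = UNIV - T"
    using big unfolding psi_a_big_def F_def by blast
  obtain Tn where Tn: "finite Tn" "UNIV - Tn \<subseteq> range (F^^n)"
    using cofin_iter[OF T] by blast
  show "z \<in> (\<lambda>(x, y). iter_word_map w n x y) ` (SL2 \<times> SL2)"
  proof (cases "z = mat 1")
    case True
    then show ?thesis using iter_one[of w n] SL2_one by (intro image_eqI[of _ _ "(mat 1, mat 1)"]) auto
  next
    case False
    define c where "c = trace z"
    have zS: "z \<in> SL2" using zin by blast
    have zns: "\<not> (z$1$2 = 0 \<and> z$2$1 = 0 \<and> z$1$1 = z$2$2)"
      using scalar_SL2[OF zS] False zin by blast
    let ?S = "{a, -a} \<union> snd ` Tn"
    have "finite ?S" using Tn by simp
    then obtain u where u: "u \<notin> ?S"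
      by (metis UNIV_I ex_new_if_finite infinite_UNIV_char_0)
    have "(c, u) \<notin> Tn" using u by force
    then have "(c, u) \<in> range (F^^n)" using Tn by blast
    then obtain s0 u0 where su: "(F^^n) (s0, u0) = (c, u)" by (metis surj_pair rangeE)
    obtain x0 y0 where xy: "x0 \<in> SL2" "y0 \<in> SL2" "trace x0 = s0" "trace y0 = a"
      "trace (x0 ** y0) = u0" using traces_onto by blast
    define v where "v = iter_word_map w n x0 y0"
    have vS: "v \<in> SL2" unfolding v_def using iter_SL2 xy by blast
    have tv: "(trace v, trace (v ** y0)) = (c, u)"
      using trace_iter[OF tp xy(1,2), of n] xy su unfolding v_def F_def by simp
    have vns: "\<not> (v$1$2 = 0 \<and> v$2$1 = 0 \<and> v$1$1 = v$2$2)"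
    proof
      assume "v$1$2 = 0 \<and> v$2$1 = 0 \<and> v$1$1 = v$2$2"
      then have "v = mat 1 \<or> v = - mat 1" using scalar_SL2[OF vS] by blast
      moreover obtain p q r t where yy: "y0 = mk p q r t" by (rule mk_cases)
      ultimately have "trace (v ** y0) = a \<or> trace (v ** y0) = - a"
        using xy(4) by (auto simp: mat1_mk yy)
      then show False using tv u by auto
    qed
    obtain g where g: "g \<in> SL2" "z = conj g (comp c)"
      using companion[OF zS zns] unfolding c_def by blast
    obtain h where h: "h \<in> SL2" "v = conj h (comp c)"
      using companion[OF vS vns] tv by (metis prod.inject)
    have "z = conj g (conj (adj h) v)" using g h conj_inv by simp
    also have "\<dots> = conj (g ** adj h) v" by (simp add: conj_conj)
    also have "\<dots> = iter_word_map w n (conj (g ** adj h) x0) (conj (g ** adj h) y0)"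
      unfolding v_def using conj_iter[of "g ** adj h" x0 y0 w n] g h xy
      by (simp add: SL2_mult SL2_adj)
    finally show ?thesis using g h xy conj_SL2 SL2_mult SL2_adj
      by (intro image_eqI[of _ _ "(conj (g ** adj h) x0, conj (g ** adj h) y0)"]) (auto simp: conj_SL2 SL2_mult SL2_adj)
  qed
qed


end
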